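(* Let $T$ be a $\delta$-Jordan Lie supertriple system over a field $\mathbb{K}$. Then $[C(T),QC(T)]\subseteq End(T,Z(T))$, i.e. for all homogeneous $D_1\in C(T)$ and $D_2\in QC(T)$ the map $[D_1,D_2]=D_1D_2-(-1)^{|D_1||D_2|}D_2D_1$ sends $T$ into $Z(T)$. Moreover, if $Z(T)=\{0\}$, then $[C(T),QC(T)]=\{0\}$.
   Context: A $\delta$-Jordan Lie supertriple system ($\delta\in\{1,-1\}$) is a $\mathbb{Z}_2$-graded vector space $T=T_{\bar 0}\oplus T_{\bar 1}$ with a trilinear product $[\cdot,\cdot,\cdot]$ such that, for all homogeneous $a,b,c,d,e$ (with $|a|$ the degree of $a$): $|[a,b,c]|=|a|+|b|+|c|$; $[b,a,c]=-\delta(-1)^{|a||b|}[a,b,c]$; $(-1)^{|a||c|}[a,b,c]+(-1)^{|b||a|}[b,c,a]+(-1)^{|c||b|}[c,a,b]=0$; and $[a,b,[c,d,e]]=[[a,b,c],d,e]+(-1)^{|c|(|a|+|b|)}[c,[a,b,d],e]+\delta(-1)^{(|a|+|b|)(|c|+|d|)}[c,d,[a,b,e]]$. $End(T)$ is the $\mathbb{Z}_2$-graded space of linear maps $T\to T$ with Lie superbracket $[D,D']=DD'-(-1)^{|D||D'|}D'D$; $End(T,Z(T))$ denotes the linear maps $T\to T$ with image in $Z(T)$. For a nonnegative integer $k$, $C^k(T)$ is the set of homogeneous $D\in End(T)$ with $\delta^{k}[D(a),b,c]=\delta^{k}(-1)^{|D||a|}[a,D(b),c]=\delta^{k}(-1)^{|D|(|a|+|b|)}[a,b,D(c)]=D([a,b,c])$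 for all homogeneous $a,b,c$; the centroid is $C(T)=\bigoplus_{k\ge0}C^k(T)$. The quasicentroid is $QC(T)=\{D\in End(T)\mid D([a,b,c])=[D(a),b,c]\ \forall a,b,c\in T\}$. The center is $Z(T)=\{a\in T\mid [a,b,c]=0\ \forall b,c\in T\}$. *)

theory Defs
  imports Complex_Main
begin

text \<open>A Z2-graded vector space over a field: the vector space is given by the
 scalar multiplication scale; G 0 and G 1 are the even and odd parts
 (degrees are naturals 0 and 1).\<close>

definition graded_space :: "('k::field \<Rightarrow> 'v::ab_group_add \<Rightarrow> 'v) \<Rightarrow> (nat \<Rightarrow> 'v set) \<Rightarrow> bool" where
  "graded_space scale G \<longleftrightarrow> Vector_Spaces.vector_space scale
     \<and> (\<forall>i<2. 0 \<in> G i \<and> (\<forall>x\<in>G i. \<forall>y\<in>G i. x + y \<in> G i)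
                 \<and> (\<forall>c. \<forall>x\<in>G i. scale c x \<in> G i))
     \<and> G 0 \<inter> G 1 = {0}
     \<and> (\<forall>v. \<exists>a\<in>G 0. \<exists>b\<in>G 1. v = a + b)"

definition trilinear :: "('k::field \<Rightarrow> 'v::ab_group_add \<Rightarrow> 'v) \<Rightarrow> ('v \<Rightarrow> 'v \<Rightarrow> 'v \<Rightarrow> 'v) \<Rightarrow> bool" where
  "trilinear scale br \<longleftrightarrow>
     (\<forall>b c. Vector_Spaces.linear scale scale (\<lambda>a. br a b c))
   \<and> (\<forall>a c. Vector_Spaces.linear scale scale (\<lambda>b. br a b c))
   \<and> (\<forall>a b. Vector_Spaces.linear scale scale (\<lambda>c. br a b c))"

definition djlsts :: "('k::field \<Rightarrow> 'v::ab_group_add \<Rightarrow> 'v) \<Rightarrow> 'k \<Rightarrow> (nat \<Rightarrow> 'v set)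
    \<Rightarrow> ('v \<Rightarrow> 'v \<Rightarrow> 'v \<Rightarrow> 'v) \<Rightarrow> bool" where
  "djlsts scale \<delta> G br \<longleftrightarrow> graded_space scale G \<and> (\<delta> = 1 \<or> \<delta> = -1) \<and> trilinear scale br
   \<and> (\<forall>i<2. \<forall>j<2. \<forall>k<2. \<forall>a\<in>G i. \<forall>b\<in>G j. \<forall>c\<in>G k.
        br a b c \<in> G ((i + j + k) mod 2)
      \<and> br b a c = scale (- \<delta> * (-1) ^ (i * j)) (br a b c)
      \<and> scale ((-1) ^ (i * k)) (br a b c) + scale ((-1) ^ (j * i)) (br b c a)
          + scale ((-1) ^ (k * j)) (br c a b) = 0
      \<and> (\<forall>l<2. \<forall>m<2. \<forall>d\<in>G l. \<forall>e\<in>G m.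
          br a b (br c d e) = br (br a b c) d e
             + scale ((-1) ^ (k * (i + j))) (br c (br a b d) e)
             + scale (\<delta> * (-1) ^ ((i + j) * (k + l))) (br c d (br a b e))))"

definition hom_end :: "('k::field \<Rightarrow> 'v::ab_group_add \<Rightarrow> 'v) \<Rightarrow> (nat \<Rightarrow> 'v set) \<Rightarrow> ('v \<Rightarrow> 'v) \<Rightarrow> nat \<Rightarrow> bool" where
  "hom_end scale G D d \<longleftrightarrow> Vector_Spaces.linear scale scale D \<and> d < 2
     \<and> (\<forall>i<2. \<forall>a\<in>G i. D a \<in> G ((i + d) mod 2))"

definition centroid_k :: "('k::field \<Rightarrow> 'v::ab_group_add \<Rightarrow> 'v) \<Rightarrow> 'k \<Rightarrow> (nat \<Rightarrow> 'v set)
    \<Rightarrow> ('v \<Rightarrow> 'v \<Rightarrow> 'v \<Rightarrow> 'v) \<Rightarrow> nat \<Rightarrow> ('v \<Rightarrow> 'v) set" where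
  "centroid_k scale \<delta> G br k = {D. \<exists>dD. hom_end scale G D dD \<and>
     (\<forall>i<2. \<forall>j<2. \<forall>l<2. \<forall>a\<in>G i. \<forall>b\<in>G j. \<forall>c\<in>G l.
        scale (\<delta> ^ k) (br (D a) b c) = D (br a b c)
      \<and> scale (\<delta> ^ k * (-1) ^ (dD * i)) (br a (D b) c) = D (br a b c)
      \<and> scale (\<delta> ^ k * (-1) ^ (dD * (i + j))) (br a b (D c)) = D (br a b c))}"

inductive_set centroid :: "('k::field \<Rightarrow> 'v::ab_group_add \<Rightarrow> 'v) \<Rightarrow> 'k \<Rightarrow> (nat \<Rightarrow> 'v set)
    \<Rightarrow> ('v \<Rightarrow> 'v \<Rightarrow> 'v \<Rightarrow> 'v) \<Rightarrow> ('v \<Rightarrow> 'v) set"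
  for scale \<delta> G br where
  zero: "(\<lambda>x. 0) \<in> centroid scale \<delta> G br"
| comp: "D \<in> centroid_k scale \<delta> G br k \<Longrightarrow> D \<in> centroid scale \<delta> G br"
| add: "D \<in> centroid scale \<delta> G br \<Longrightarrow> E \<in> centroid scale \<delta> G br
          \<Longrightarrow> (\<lambda>x. D x + E x) \<in> centroid scale \<delta> G br"

definition quasicentroid :: "('k::field \<Rightarrow> 'v::ab_group_add \<Rightarrow> 'v) \<Rightarrow> ('v \<Rightarrow> 'v \<Rightarrow> 'v \<Rightarrow> 'v) \<Rightarrow> ('v \<Rightarrow> 'v) set" where
  "quasicentroid scale br = {D. Vector_Spaces.linear scale scale D \<and> (\<forall>a b c. D (br a b c) = br (D a) b c)}"

definition center :: "('v::zero \<Rightarrow> 'v \<Rightarrow> 'v \<Rightarrow> 'v) \<Rightarrow> 'v set" where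
  "center br = {a. \<forall>b c. br a b c = 0}"

definition sbracket :: "('k::field \<Rightarrow> 'v::ab_group_add \<Rightarrow> 'v) \<Rightarrow> ('v \<Rightarrow> 'v) \<Rightarrow> nat \<Rightarrow> ('v \<Rightarrow> 'v) \<Rightarrow> nat \<Rightarrow> 'v \<Rightarrow> 'v" where
  "sbracket scale D1 d1 D2 d2 = (\<lambda>x. D1 (D2 x) - scale ((-1) ^ (d1 * d2)) (D2 (D1 x)))"

end

theory Submission
  imports Defs
begin

inductive_set good :: "('k::field \<Rightarrow> 'v::ab_group_add \<Rightarrow> 'v) \<Rightarrow> 'k \<Rightarrow> (nat \<Rightarrow> 'v set)
    \<Rightarrow> ('v \<Rightarrow> 'v \<Rightarrow> 'v \<Rightarrow> 'v) \<Rightarrow> nat \<Rightarrow> ('v \<Rightarrow> 'v) set"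
  for scale \<delta> G br d where
  gz: "(\<lambda>x. 0) \<in> good scale \<delta> G br d"
| gc: "D \<in> centroid_k scale \<delta> G br k \<Longrightarrow> hom_end scale G D d \<Longrightarrow> D \<in> good scale \<delta> G br d"
| ga: "D \<in> good scale \<delta> G br d \<Longrightarrow> E \<in> good scale \<delta> G br d
          \<Longrightarrow> (\<lambda>x. D x + E x) \<in> good scale \<delta> G br d"

lemma lin_add: "Vector_Spaces.linear s s f \<Longrightarrow> f (x + y) = f x + f y"
  by (simp add: Vector_Spaces.linear_iff)
lemma lin_scale: "Vector_Spaces.linear s s f \<Longrightarrow> f (s c x) = s c (f x)"
  by (simp add: Vector_Spaces.linear_iff)
lemma lin_zero: "Vector_Spaces.linear s s f \<Longrightarrow> f 0 = 0"
  by (metis add_cancel_right_right lin_add)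
lemma lin_diff: "Vector_Spaces.linear s s f \<Longrightarrow> f (x - y) = f x - f y"
  by (metis add_diff_cancel_right' diff_add_cancel lin_add)

lemma ext3:
  assumes decomp: "\<forall>v. \<exists>a\<in>G (0::nat). \<exists>b\<in>G 1. v = a + b"
    and a1: "\<And>x y b c. f (x+y) b c = f x b c + f y b c"
    and a2: "\<And>x y a c. f a (x+y) c = f a x c + f a y c"
    and a3: "\<And>x y a b. f a b (x+y) = f a b x + f a b y"
    and h: "\<And>i j l a b c. i<2 \<Longrightarrow> j<2 \<Longrightarrow> l<2 \<Longrightarrow> a \<in> G i \<Longrightarrow> b \<in> G j \<Longrightarrow> c \<in> G l \<Longrightarrow> f a b c = 0"
  shows "f x y z = (0::'v::ab_group_add)"
proof -
  obtain x0 x1 where x: "x0 \<in> G 0" "x1 \<in> G 1" "x = x0 + x1" using decomp by blast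
  obtain y0 y1 where y: "y0 \<in> G 0" "y1 \<in> G 1" "y = y0 + y1" using decomp by blast
  obtain z0 z1 where z: "z0 \<in> G 0" "z1 \<in> G 1" "z = z0 + z1" using decomp by blast
  have "\<And>a b c. a \<in> G 0 \<union> G 1 \<Longrightarrow> b \<in> G 0 \<union> G 1 \<Longrightarrow> c \<in> G 0 \<union> G 1 \<Longrightarrow> f a b c = 0"
    using h[of 0 0 0] h[of 0 0 1] h[of 0 1 0] h[of 0 1 1] h[of 1 0 0] h[of 1 0 1] h[of 1 1 0] h[of 1 1 1]
    by auto
  then show ?thesis using x y z by (simp add: a1 a2 a3)
qed

context
  fixes scale :: "'k::field \<Rightarrow> 'v::ab_group_add \<Rightarrow> 'v"
    and \<delta> :: 'k and G :: "nat \<Rightarrow> 'v set" and br :: "'v \<Rightarrow> 'v \<Rightarrow> 'v \<Rightarrow> 'v"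
  assumes T: "djlsts scale \<delta> G br"
begin

lemma vsp: "vector_space scale" using T by (simp add: djlsts_def graded_space_def)

interpretation vs: vector_space scale by (rule vsp)

lemma G0: "i<2 \<Longrightarrow> 0 \<in> G i" using T by (simp add: djlsts_def graded_space_def)
lemma Gadd: "i<2 \<Longrightarrow> x \<in> G i \<Longrightarrow> y \<in> G i \<Longrightarrow> x + y \<in> G i"
  using T by (simp add: djlsts_def graded_space_def)
lemma Gscale: "i<2 \<Longrightarrow> x \<in> G i \<Longrightarrow> scale c x \<in> G i"
  using T by (simp add: djlsts_def graded_space_def)
lemma Gint: "G 0 \<inter> G 1 = {0}"
  using T by (simp add: djlsts_def graded_space_def)
lemma decomp: "\<forall>v. \<exists>a\<in>G 0. \<exists>b\<in>G 1. v = a + b"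
  using T by (simp add: djlsts_def graded_space_def)
lemma Gdiff: "i<2 \<Longrightarrow> x \<in> G i \<Longrightarrow> y \<in> G i \<Longrightarrow> x - y \<in> G i"
proof -
  assume "i<2" "x \<in> G i" "y \<in> G i"
  then have "x + scale (-1) y \<in> G i" using Gadd Gscale by blast
  then show ?thesis by simp
qed
lemma brl1: "Vector_Spaces.linear scale scale (\<lambda>a. br a b c)"
  using T by (simp add: djlsts_def trilinear_def)
lemma brl2: "Vector_Spaces.linear scale scale (\<lambda>b. br a b c)"
  using T by (simp add: djlsts_def trilinear_def)
lemma brl3: "Vector_Spaces.linear scale scale (\<lambda>c. br a b c)"
  using T by (simp add: djlsts_def trilinear_def)
lemma dsq: "\<delta> ^ k * \<delta> ^ k = 1"
proof -
  have "\<delta> = 1 \<or> \<delta> = -1" using T by (simp add: djlsts_def)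
  then have "\<delta> * \<delta> = 1" by auto
  then show ?thesis by (metis power_mult_distrib power_one)
qed

lemma lin0: "Vector_Spaces.linear scale scale (\<lambda>x. 0)"
  by (simp add: Vector_Spaces.linear_iff vsp)

lemma hom_zero: "d < 2 \<Longrightarrow> hom_end scale G (\<lambda>x. 0) d"
  by (simp add: hom_end_def lin0 G0)

lemma hom_sum: "hom_end scale G D d \<Longrightarrow> hom_end scale G E d \<Longrightarrow> hom_end scale G (\<lambda>x. D x + E x) d"
  unfolding hom_end_def
  by (auto simp: Vector_Spaces.linear_iff vsp vs.scale_right_distrib intro!: Gadd)

lemma hom_diff: "hom_end scale G D d \<Longrightarrow> hom_end scale G E d \<Longrightarrow> hom_end scale G (\<lambda>x. D x - E x) d"
  unfolding hom_end_def
  by (auto simp: Vector_Spaces.linear_iff vsp vs.scale_right_diff_distrib intro!: Gdiff)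

lemma hom_two: assumes "hom_end scale G D d" "hom_end scale G D e" "d \<noteq> e"
  shows "D = (\<lambda>x. 0)"
proof
  fix x
  have z: "D a = 0" if "i < 2" "a \<in> G i" for i a
  proof -
    have "D a \<in> G ((i + d) mod 2)" "D a \<in> G ((i + e) mod 2)" "d < 2" "e < 2"
      using assms that by (auto simp: hom_end_def)
    then have "D a \<in> G 0 \<inter> G 1" using assms(3) that(1) by (cases i; cases d; cases e; auto)
    then show ?thesis using Gint by auto
  qed
  obtain a b where "a \<in> G 0" "b \<in> G 1" "x = a + b" using decomp by blast
  then show "D x = 0" using z[of 0 a] z[of 1 b] lin_add[of scale D] assms(1)
    by (simp add: hom_end_def)
qed

lemma good_hom: "P \<in> good scale \<delta> G br d \<Longrightarrow> d < 2 \<Longrightarrow> hom_end scale G P d"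
  by (induction rule: good.induct) (auto simp: hom_zero hom_sum)

lemma split: "D \<in> centroid scale \<delta> G br \<Longrightarrow>
   \<exists>P0 P1. P0 \<in> good scale \<delta> G br 0 \<and> P1 \<in> good scale \<delta> G br 1 \<and> D = (\<lambda>x. P0 x + P1 x)"
proof (induction rule: centroid.induct)
  case zero
  then show ?case using gz by fastforce
next
  case (comp D k)
  then obtain dD where h: "hom_end scale G D dD" by (auto simp: centroid_k_def)
  then have "dD = 0 \<or> dD = 1" by (auto simp: hom_end_def)
  then show ?case
  proof
    assume "dD = 0"
    then show ?thesis using comp h gc[of D] gz by fastforce
  next
    assume "dD = 1"
    then show ?thesis using comp h gc[of D] gz by fastforce
  qed
next
  case (add D E)
  then obtain P0 P1 Q0 Q1 where "P0 \<in> good scale \<delta> G br 0" "P1 \<in> good scale \<delta> G br 1"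
    "Q0 \<in> good scale \<delta> G br 0" "Q1 \<in> good scale \<delta> G br 1"
    "D = (\<lambda>x. P0 x + P1 x)" "E = (\<lambda>x. Q0 x + Q1 x)" by blast
  then show ?case
    by (intro exI[of _ "\<lambda>x. P0 x + Q0 x"] exI[of _ "\<lambda>x. P1 x + Q1 x"])
       (auto intro: ga simp: add_ac)
qed

lemma zero_case: "br (sbracket scale (\<lambda>x. 0) d D2 d2 a) b c = 0"
  if "Vector_Spaces.linear scale scale D2" for D2 d d2 a b c
proof -
  have "sbracket scale (\<lambda>x. 0) d D2 d2 a = 0"
    using lin_zero[OF that] by (simp add: sbracket_def)
  then show ?thesis using lin_zero[OF brl1] by simp
qed

lemma key:
  assumes "P \<in> good scale \<delta> G br d" "d < 2"
    and q: "D2 \<in> quasicentroid scale br" and h2: "hom_end scale G D2 d2"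
    and hh: "i<2" "j<2" "l<2" "a \<in> G i" "b \<in> G j" "c \<in> G l"
  shows "br (sbracket scale P d D2 d2 a) b c = 0"
  using assms(1,2)
proof (induction rule: good.induct)
  case gz
  then show ?case using zero_case q by (simp add: quasicentroid_def)
next
  case (gc E k)
  have l2: "Vector_Spaces.linear scale scale D2" and qc: "\<And>a b c. D2 (br a b c) = br (D2 a) b c"
    using q by (auto simp: quasicentroid_def)
  obtain dD where hE: "hom_end scale G E dD" and
    cp: "\<forall>i<2. \<forall>j<2. \<forall>l<2. \<forall>a\<in>G i. \<forall>b\<in>G j. \<forall>c\<in>G l.
        scale (\<delta> ^ k) (br (E a) b c) = E (br a b c)
      \<and> scale (\<delta> ^ k * (-1) ^ (dD * i)) (br a (E b) c) = E (br a b c)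
      \<and> scale (\<delta> ^ k * (-1) ^ (dD * (i + j))) (br a b (E c)) = E (br a b c)"
    using gc by (auto simp: centroid_k_def)
  show ?case
  proof (cases "dD = d")
    case False
    then have "E = (\<lambda>x. 0)" using hom_two[OF hE gc(2)] by simp
    then show ?thesis using zero_case l2 by simp
  next
    case True
    define s where "s = \<delta> ^ k"
    have ss: "s * s = 1" using dsq s_def by simp
    have lE: "Vector_Spaces.linear scale scale E" using hE by (simp add: hom_end_def)
    define i' where "i' = (i + d2) mod 2"
    have i'2: "i' < 2" by (simp add: i'_def)
    have D2a: "D2 a \<in> G i'" using h2 hh by (simp add: hom_end_def i'_def)
    define \<sigma> where "\<sigma> = ((-1::'k) ^ (d * d2))"
    define \<tau> where "\<tau> = ((-1::'k) ^ (d * i))"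
    have sig: "(-1::'k) ^ (d * i') = \<sigma> * \<tau>"
      using hh(1) gc(3) hE h2 unfolding \<sigma>_def \<tau>_def i'_def hom_end_def
      by (cases i; cases d; cases d2; auto)
    define u where "u = br (D2 a) (E b) c"
    define X where "X = br a b c"
    have h1: "scale (s * (\<sigma> * \<tau>)) u = E (br (D2 a) b c)"
      using cp i'2 hh D2a True sig unfolding s_def u_def by metis
    have h2': "scale (s * \<tau>) (br a (E b) c) = E X"
      using cp hh True unfolding s_def \<tau>_def X_def by metis
    have e1: "E (D2 X) = scale (s * (\<sigma> * \<tau>)) u" using h1 qc X_def by simp
    have e2: "D2 (E X) = scale (s * \<tau>) u"
      using h2'[symmetric] lin_scale[OF l2] qc u_def by simp
    have Z: "E (D2 X) = scale \<sigma> (D2 (E X))" using e1 e2 by (simp add: ac_simps)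
    have f1: "scale s (br (E (D2 a)) b c) = E (D2 X)"
      using cp i'2 hh D2a qc unfolding s_def X_def by metis
    have g1: "br (E (D2 a)) b c = scale s (E (D2 X))"
    proof -
      have "scale s (scale s (br (E (D2 a)) b c)) = br (E (D2 a)) b c" using ss by simp
      then show ?thesis using f1 by simp
    qed
    have f2: "scale s (br (E a) b c) = E X"
      using cp hh unfolding s_def X_def by metis
    have g2: "br (E a) b c = scale s (E X)"
    proof -
      have "scale s (scale s (br (E a) b c)) = br (E a) b c" using ss by simp
      then show ?thesis using f2 by simp
    qed
    have g3: "br (D2 (E a)) b c = scale s (D2 (E X))"
      using qc[of "E a" b c] g2 lin_scale[OF l2] by simp
    have "br (sbracket scale E d D2 d2 a) b c
        = br (E (D2 a)) b c - scale \<sigma> (br (D2 (E a)) b c)"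
      unfolding sbracket_def \<sigma>_def
      using lin_diff[OF brl1, of "E (D2 a)"] lin_scale[OF brl1] by simp
    also have "\<dots> = 0" using g1 g3 Z by (simp add: mult.commute)
    finally show ?thesis .
  qed
next
  case (ga D E)
  have l2: "Vector_Spaces.linear scale scale D2"
    using q by (auto simp: quasicentroid_def)
  have "sbracket scale (\<lambda>x. D x + E x) d D2 d2 a
       = sbracket scale D d D2 d2 a + sbracket scale E d D2 d2 a"
    unfolding sbracket_def using lin_add[OF l2] by (simp add: vs.scale_right_distrib algebra_simps)
  then show ?case using ga lin_add[OF brl1] by simp
qed

lemma part1:
  assumes "D1 \<in> centroid scale \<delta> G br" "hom_end scale G D1 d1"
    "D2 \<in> quasicentroid scale br" "hom_end scale G D2 d2"
  shows "br (sbracket scale D1 d1 D2 d2 x) y z = 0"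
proof -
  obtain P0 P1 where P: "P0 \<in> good scale \<delta> G br 0" "P1 \<in> good scale \<delta> G br 1"
    "D1 = (\<lambda>x. P0 x + P1 x)" using split assms(1) by blast
  have hP0: "hom_end scale G P0 0" and hP1: "hom_end scale G P1 1" using good_hom P by auto
  have d1: "d1 < 2" using assms(2) by (simp add: hom_end_def)
  obtain P where PP: "P \<in> good scale \<delta> G br d1" "D1 = P"
  proof (cases "d1 = 0")
    case True
    have "hom_end scale G (\<lambda>x. D1 x - P0 x) 0" using hom_diff assms(2) hP0 True by simp
    moreover have "(\<lambda>x. D1 x - P0 x) = P1" using P(3) by auto
    ultimately have "P1 = (\<lambda>x. 0)" using hom_two hP1 by auto
    then have "D1 = P0" using P(3) by auto
    then show ?thesis using that P True by auto
  next
    case False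
    then have T1: "d1 = 1" using d1 by simp
    have "hom_end scale G (\<lambda>x. D1 x - P1 x) 1" using hom_diff assms(2) hP1 T1 by simp
    moreover have "(\<lambda>x. D1 x - P1 x) = P0" using P(3) by auto
    ultimately have "P0 = (\<lambda>x. 0)" using hom_two hP0 by auto
    then have "D1 = P1" using P(3) by auto
    then show ?thesis using that P T1 by auto
  qed
  have l1: "Vector_Spaces.linear scale scale D1" using assms(2) by (simp add: hom_end_def)
  have l2: "Vector_Spaces.linear scale scale D2" using assms(4) by (simp add: hom_end_def)
  have sadd: "sbracket scale D1 d1 D2 d2 (x + y) = sbracket scale D1 d1 D2 d2 x + sbracket scale D1 d1 D2 d2 y"
    for x y
    unfolding sbracket_def using lin_add[OF l2] lin_add[OF l1]
    by (simp add: vs.scale_right_distrib algebra_simps)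
  show ?thesis
  proof (rule ext3[where G=G and f="\<lambda>a b c. br (sbracket scale D1 d1 D2 d2 a) b c"])
    show "\<forall>v. \<exists>a\<in>G 0. \<exists>b\<in>G 1. v = a + b" by (rule decomp)
  next
    fix x y b c show "br (sbracket scale D1 d1 D2 d2 (x + y)) b c =
      br (sbracket scale D1 d1 D2 d2 x) b c + br (sbracket scale D1 d1 D2 d2 y) b c"
      using sadd lin_add[OF brl1] by simp
  next
    fix x y a c show "br (sbracket scale D1 d1 D2 d2 a) (x + y) c =
      br (sbracket scale D1 d1 D2 d2 a) x c + br (sbracket scale D1 d1 D2 d2 a) y c"
      using lin_add[OF brl2] by simp
  next
    fix x y a b show "br (sbracket scale D1 d1 D2 d2 a) b (x + y) =
      br (sbracket scale D1 d1 D2 d2 a) b x + br (sbracket scale D1 d1 D2 d2 a) b y"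
      using lin_add[OF brl3] by simp
  next
    fix i j l a b c assume "i<2" "j<2" "l<2" "a \<in> G i" "b \<in> G j" "c \<in> G l"
    then show "br (sbracket scale D1 d1 D2 d2 a) b c = 0"
      using key[OF PP(1) d1 assms(3,4)] PP(2) by blast
  qed
qed

end

theorem theorem2p16:
  fixes scale :: "'k::field \<Rightarrow> 'v::ab_group_add \<Rightarrow> 'v"
    and \<delta> :: 'k and G :: "nat \<Rightarrow> 'v set" and br :: "'v \<Rightarrow> 'v \<Rightarrow> 'v \<Rightarrow> 'v"
  assumes "djlsts scale \<delta> G br"
  shows "(\<forall>D1 d1 D2 d2. D1 \<in> centroid scale \<delta> G br \<and> hom_end scale G D1 d1
            \<and> D2 \<in> quasicentroid scale br \<and> hom_end scale G D2 d2
            \<longrightarrow> (\<forall>x. sbracket scale D1 d1 D2 d2 x \<in> center br))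
       \<and> (center br = {0} \<longrightarrow>
          (\<forall>D1 d1 D2 d2. D1 \<in> centroid scale \<delta> G br \<and> hom_end scale G D1 d1
            \<and> D2 \<in> quasicentroid scale br \<and> hom_end scale G D2 d2
            \<longrightarrow> sbracket scale D1 d1 D2 d2 = (\<lambda>x. 0)))"
proof -
  have A: "\<forall>D1 d1 D2 d2. D1 \<in> centroid scale \<delta> G br \<and> hom_end scale G D1 d1
            \<and> D2 \<in> quasicentroid scale br \<and> hom_end scale G D2 d2
            \<longrightarrow> (\<forall>x. sbracket scale D1 d1 D2 d2 x \<in> center br)"
    using part1[OF assms] by (auto simp: center_def)
  moreover have "center br = {0} \<longrightarrow>
          (\<forall>D1 d1 D2 d2. D1 \<in> centroid scale \<delta> G br \<and> hom_end scale G D1 d1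
            \<and> D2 \<in> quasicentroid scale br \<and> hom_end scale G D2 d2
            \<longrightarrow> sbracket scale D1 d1 D2 d2 = (\<lambda>x. 0))"
    using A by auto
  ultimately show ?thesis by blast
qed

end
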